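(* In the setting described in the context, let $G\in R_w$ and $H\in R_z$ ($w,z\in\mathbb{Z}^{n-1}_{\ge0}$) be coprime polynomials. If $G$ is not divisible by any monomial (of positive degree), then for every $i\in M$ one has $G\,R_{z+i}+H\,R_{w+i}=R_{w+z+i}$.
   Context: Let $\mathbb{K}$ be a field. A Newton polyhedron is the convex hull of $S+\mathbb{R}^n_{\ge0}$ for a nonempty finite $S\subset\mathbb{Z}^n_{\ge0}$; for $\xi\in\mathbb{R}^n_{\ge0}$ the face $\Delta^\xi=\{a\in\Delta:\langle\xi,a\rangle=\min_{b\in\Delta}\langle\xi,b\rangle\}$ is compact iff $\xi\in\mathbb{R}^n_{>0}$; a loose edge is a compact 1-dimensional face not contained in any compact face of dimension $\ge2$. Let $\Delta$ be a Newton polyhedron with a loose edge $E$, let $c\in\mathbb{Z}^n$ be a primitive lattice vector parallel to $E$, and let $\xi_1,\dots,\xi_{n-1}\in\mathbb{Z}^n_{\ge0}$ be linearly independent vectors with $\langle\xi_i,c\rangle=0$. For $\alpha\in\mathbb{Z}^n$ put $\omega(\underline x^\alpha)=(\langle\xi_1,\alpha\rangle,\dots,\langle\xi_{n-1},\alpha\rangle)$. For $w\in\mathbb{Z}^{n-1}_{\ge0}$ let $R_w\subset\mathbb{K}[x_1,\dots,x_n]$ be the $\mathbb{K}$-span of monomials $\underline x^\alpha$, $\alpha\in\mathbb{Z}^n_{\ge0}$, with $\omega(\underline x^\alpha)=w$. Let $M$ be the set of $z\in\mathbb{Z}^{n-1}_{\ge0}$ for which there is $\alpha\in\mathbb{Z}^n$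 with $\omega(\underline x^\alpha)=z$ and $\langle\xi,\alpha\rangle\ge0$ for all $\xi\in\mathbb{R}^n_{\ge0}$ orthogonal to $E$. *)

theory Defs
  imports "HOL-Analysis.Analysis" "HOL-Library.Poly_Mapping"
begin

text \<open>Variables x_1..x_n are indexed by a finite type 'n (n = CARD('n)).  Vectors in Z^(n-1) are functions nat \<Rightarrow> int which vanish
  at indices \<ge> n - 1.\<close>

type_synonym ('n, 'a) mpoly = "('n \<Rightarrow>\<^sub>0 nat) \<Rightarrow>\<^sub>0 'a"

definition realvec :: "('n::finite \<Rightarrow> int) \<Rightarrow> real^'n" where
  "realvec a = (\<chi> i. real_of_int (a i))"

definition idot :: "('n::finite \<Rightarrow> int) \<Rightarrow> ('n \<Rightarrow> int) \<Rightarrow> int" where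
  "idot a b = (\<Sum>i\<in>UNIV. a i * b i)"

definition newton_polyhedron :: "('n::finite \<Rightarrow> nat) set \<Rightarrow> (real^'n) set" where
  "newton_polyhedron S =
     convex hull {(\<chi> i. real (s i)) + v | s v. s \<in> S \<and> (\<forall>i. 0 \<le> v $ i)}"

definition is_newton_polyhedron :: "(real^'n::finite) set \<Rightarrow> bool" where
  "is_newton_polyhedron D \<longleftrightarrow> (\<exists>S. finite S \<and> S \<noteq> {} \<and> D = newton_polyhedron S)"

definition loose_edge :: "(real^'n::finite) set \<Rightarrow> (real^'n) set \<Rightarrow> bool" where
  "loose_edge D E \<longleftrightarrow> E face_of D \<and> compact E \<and> aff_dim E = 1 \<and>
     (\<forall>F. F face_of D \<and> compact F \<and> aff_dim F \<ge> 2 \<longrightarrow> \<not> E \<subseteq> F)"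

definition primitive_vec :: "('n::finite \<Rightarrow> int) \<Rightarrow> bool" where
  "primitive_vec c \<longleftrightarrow> c \<noteq> (\<lambda>_. 0) \<and>
     (\<forall>k d. (\<forall>i. c i = k * d i) \<longrightarrow> \<bar>k\<bar> = 1)"

definition parallel_to :: "('n::finite \<Rightarrow> int) \<Rightarrow> (real^'n) set \<Rightarrow> bool" where
  "parallel_to c E \<longleftrightarrow> (\<exists>a\<in>E. \<exists>b\<in>E. a \<noteq> b \<and> (\<exists>t::real. realvec c = t *\<^sub>R (b - a)))"

definition orth_to :: "real^'n::finite \<Rightarrow> (real^'n) set \<Rightarrow> bool" where
  "orth_to \<xi> E \<longleftrightarrow> (\<forall>a\<in>E. \<forall>b\<in>E. \<xi> \<bullet> (b - a) = 0)"

definition lin_indep_family :: "nat \<Rightarrow> (nat \<Rightarrow> ('n::finite \<Rightarrow> int)) \<Rightarrow> bool" where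
  "lin_indep_family m xi \<longleftrightarrow>
     (\<forall>r::nat \<Rightarrow> real. (\<Sum>i<m. r i *\<^sub>R realvec (xi i)) = 0 \<longrightarrow> (\<forall>i<m. r i = 0))"

definition omega :: "(nat \<Rightarrow> ('n::finite \<Rightarrow> int)) \<Rightarrow> ('n \<Rightarrow> int) \<Rightarrow> (nat \<Rightarrow> int)" where
  "omega xi \<alpha> = (\<lambda>i. if i < CARD('n) - 1 then idot (xi i) \<alpha> else 0)"

definition nonneg_wvec :: "'n::finite itself \<Rightarrow> (nat \<Rightarrow> int) \<Rightarrow> bool" where
  "nonneg_wvec _ w \<longleftrightarrow> (\<forall>i. 0 \<le> w i) \<and> (\<forall>i. CARD('n) - 1 \<le> i \<longrightarrow> w i = 0)"

definition Rw :: "(nat \<Rightarrow> ('n::finite \<Rightarrow> int)) \<Rightarrow> (nat \<Rightarrow> int) \<Rightarrow> ('n, 'a::zero) mpoly set" where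
  "Rw xi w = {p. \<forall>m\<in>Poly_Mapping.keys p. omega xi (\<lambda>j. int (Poly_Mapping.lookup m j)) = w}"

definition Mset :: "(nat \<Rightarrow> ('n::finite \<Rightarrow> int)) \<Rightarrow> (real^'n) set \<Rightarrow> (nat \<Rightarrow> int) set" where
  "Mset xi E = {z. nonneg_wvec TYPE('n) z \<and>
     (\<exists>\<alpha>::'n \<Rightarrow> int. omega xi \<alpha> = z \<and>
        (\<forall>\<xi>::real^'n. (\<forall>j. 0 \<le> \<xi> $ j) \<and> orth_to \<xi> E \<longrightarrow> 0 \<le> \<xi> \<bullet> realvec \<alpha>))}"

definition mp_coprime :: "('n, 'a::field) mpoly \<Rightarrow> ('n, 'a) mpoly \<Rightarrow> bool" where
  "mp_coprime a b \<longleftrightarrow> (\<forall>c. c dvd a \<longrightarrow> c dvd b \<longrightarrow> c dvd 1)"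

end

theory Submission
  imports Defs "HOL-Computational_Algebra.Polynomial"
begin



definition wt :: "('n::finite \<Rightarrow> int) \<Rightarrow> ('n \<Rightarrow>\<^sub>0 nat) \<Rightarrow> nat" where
  "wt c k = (\<Sum>j\<in>UNIV. nat (c j) * Poly_Mapping.lookup k j)"

lemma wt_add: "wt c (a + b) = wt c a + wt c b"
  by (simp add: wt_def lookup_add algebra_simps sum.distrib)

lemma wt_zero[simp]: "wt c 0 = 0"
  by (simp add: wt_def)

definition psi :: "('n::finite \<Rightarrow> int) \<Rightarrow> (('n \<Rightarrow>\<^sub>0 nat) \<Rightarrow>\<^sub>0 'a::comm_ring_1) \<Rightarrow> 'a poly" where
  "psi c P = (\<Sum>k\<in>Poly_Mapping.keys P. monom (Poly_Mapping.lookup P k) (wt c k))"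

lemma psi_superset:
  assumes "finite K" "Poly_Mapping.keys P \<subseteq> K"
  shows "psi c P = (\<Sum>k\<in>K. monom (Poly_Mapping.lookup P k) (wt c k))"
  unfolding psi_def
  by (rule sum.mono_neutral_left) (use assms in \<open>auto simp: in_keys_iff\<close>)

lemma psi_add: "psi c (P + Q) = psi c P + psi c Q"
proof -
  let ?K = "Poly_Mapping.keys P \<union> Poly_Mapping.keys Q"
  have f: "finite ?K" by simp
  have "psi c (P + Q) = (\<Sum>k\<in>?K. monom (Poly_Mapping.lookup (P+Q) k) (wt c k))"
    by (rule psi_superset[OF f]) (rule keys_add)
  also have "\<dots> = (\<Sum>k\<in>?K. monom (Poly_Mapping.lookup P k) (wt c k)) + (\<Sum>k\<in>?K. monom (Poly_Mapping.lookup Q k) (wt c k))"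
    by (simp add: lookup_add add_monom[symmetric] sum.distrib)
  also have "\<dots> = psi c P + psi c Q"
    by (simp add: psi_superset[OF f])
  finally show ?thesis .
qed

lemma psi_zero[simp]: "psi c 0 = 0"
  by (simp add: psi_def)

lemma psi_sum: "psi c (\<Sum>i\<in>I. f i) = (\<Sum>i\<in>I. psi c (f i))"
  by (induction I rule: infinite_finite_induct) (auto simp: psi_add)

lemma psi_single: "psi c (Poly_Mapping.single k a) = monom a (wt c k)"
  by (cases "a = 0") (auto simp: psi_def)

lemma pm_expand: "P = (\<Sum>k\<in>Poly_Mapping.keys P. Poly_Mapping.single k (Poly_Mapping.lookup P k))"
proof (rule poly_mapping_eqI)
  fix x
  show "Poly_Mapping.lookup P x = Poly_Mapping.lookup (\<Sum>k\<in>Poly_Mapping.keys P. Poly_Mapping.single k (Poly_Mapping.lookup P k)) x"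
    by (cases "x \<in> Poly_Mapping.keys P") (auto simp: lookup_sum lookup_single when_def in_keys_iff)
qed

lemma psi_mult: "psi c (P * Q) = psi c P * psi c Q"
proof -
  have "P * Q = (\<Sum>k\<in>Poly_Mapping.keys P. Poly_Mapping.single k (Poly_Mapping.lookup P k)) * (\<Sum>l\<in>Poly_Mapping.keys Q. Poly_Mapping.single l (Poly_Mapping.lookup Q l))"
    using pm_expand[of P] pm_expand[of Q] by simp
  also have "\<dots> = (\<Sum>k\<in>Poly_Mapping.keys P. \<Sum>l\<in>Poly_Mapping.keys Q. Poly_Mapping.single (k + l) (Poly_Mapping.lookup P k * Poly_Mapping.lookup Q l))"
    by (simp add: sum_product mult_single)
  finally have "psi c (P * Q) = (\<Sum>k\<in>Poly_Mapping.keys P. \<Sum>l\<in>Poly_Mapping.keys Q. monom (Poly_Mapping.lookup P k * Poly_Mapping.lookup Q l) (wt c k + wt c l))"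
    by (simp add: psi_sum psi_single wt_add)
  also have "\<dots> = psi c P * psi c Q"
    by (simp add: psi_def sum_product mult_monom)
  finally show ?thesis .
qed

lemma psi_one[simp]: "psi c 1 = 1"
  by (metis psi_single single_one wt_zero one_poly_eq_simps(1) monom_eq_1)

lemma psi_uminus: "psi c (- P) = - psi c P"
  by (metis add.right_inverse eq_neg_iff_add_eq_0 psi_add psi_zero)

lemma psi_diff: "psi c (P - Q) = psi c P - psi c Q"
  by (metis diff_conv_add_uminus psi_add psi_uminus)


definition nonneg :: "('n \<Rightarrow> int) \<Rightarrow> bool" where
  "nonneg b \<longleftrightarrow> (\<forall>j. 0 \<le> b j)"

definition mnv :: "('n::finite \<Rightarrow> int) \<Rightarrow> ('n \<Rightarrow>\<^sub>0 nat)" where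
  "mnv b = Abs_poly_mapping (\<lambda>j. nat (b j))"

lemma lookup_mnv[simp]: "Poly_Mapping.lookup (mnv b) = (\<lambda>j. nat (b j))"
  by (simp add: mnv_def)

definition iv :: "('n \<Rightarrow>\<^sub>0 nat) \<Rightarrow> ('n \<Rightarrow> int)" where
  "iv k = (\<lambda>j. int (Poly_Mapping.lookup k j))"

lemma mnv_iv[simp]: "mnv (iv k) = (k::'n::finite \<Rightarrow>\<^sub>0 nat)"
  by (rule poly_mapping_eqI) (simp add: iv_def)

lemma iv_mnv: "nonneg b \<Longrightarrow> iv (mnv b) = b"
  by (auto simp: iv_def nonneg_def fun_eq_iff)

lemma nonneg_iv[simp]: "nonneg (iv k)"
  by (simp add: nonneg_def iv_def)

lemma iv_add: "iv (a + b) = (\<lambda>j. iv a j + iv b j)"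
  by (simp add: iv_def lookup_add fun_eq_iff)

lemma iv_zero[simp]: "iv 0 = (\<lambda>j. 0)"
  by (simp add: iv_def fun_eq_iff)

lemma mnv_add: "nonneg a \<Longrightarrow> nonneg b \<Longrightarrow> mnv (\<lambda>j. a j + b j) = mnv a + (mnv b :: 'n::finite \<Rightarrow>\<^sub>0 nat)"
  by (rule poly_mapping_eqI) (simp add: lookup_add nonneg_def nat_add_distrib)

lemma mnv_inj: "nonneg a \<Longrightarrow> nonneg b \<Longrightarrow> mnv a = (mnv b :: 'n::finite \<Rightarrow>\<^sub>0 nat) \<Longrightarrow> a = b"
  by (metis iv_mnv)

definition wi :: "('n::finite \<Rightarrow> int) \<Rightarrow> ('n \<Rightarrow> int) \<Rightarrow> int" where
  "wi c b = (\<Sum>j\<in>UNIV. max 0 (c j) * b j)"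

lemma wt_mnv: "nonneg b \<Longrightarrow> int (wt c (mnv b)) = wi c b"
  by (simp add: wt_def wi_def nonneg_def of_nat_sum max_def)

definition lnv :: "('n \<Rightarrow> int) \<Rightarrow> ('n \<Rightarrow> int) \<Rightarrow> int \<Rightarrow> ('n \<Rightarrow> int)" where
  "lnv c b s = (\<lambda>j. b j + s * c j)"

lemma lnv_0[simp]: "lnv c b 0 = b"
  by (simp add: lnv_def fun_eq_iff)

lemma lnv_lnv: "lnv c (lnv c b s) t = lnv c b (s + t)"
  by (simp add: lnv_def fun_eq_iff algebra_simps)

lemma wi_lnv: "wi c (lnv c b s) = wi c b + s * wi c c"
  by (simp add: wi_def lnv_def sum.distrib algebra_simps sum_distrib_left)

lemma wi_cc: "0 \<le> wi c c"
  unfolding wi_def by (rule sum_nonneg) (simp add: max_def)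

lemma wi_nonneg: "nonneg b \<Longrightarrow> 0 \<le> wi c b"
  unfolding wi_def nonneg_def by (intro sum_nonneg) simp

definition L :: "('n::finite \<Rightarrow> int) \<Rightarrow> ('n \<Rightarrow> int) \<Rightarrow> 'a::comm_ring_1 poly \<Rightarrow> (('n \<Rightarrow>\<^sub>0 nat) \<Rightarrow>\<^sub>0 'a)" where
  "L c b p = (\<Sum>s\<le>degree p. Poly_Mapping.single (mnv (lnv c b (int s))) (coeff p s))"

definition vld :: "('n \<Rightarrow> int) \<Rightarrow> ('n \<Rightarrow> int) \<Rightarrow> 'a::zero poly \<Rightarrow> bool" where
  "vld c b p \<longleftrightarrow> (p \<noteq> 0 \<longrightarrow> (\<forall>s\<le>degree p. nonneg (lnv c b (int s))))"

lemma L_0[simp]: "L c b 0 = 0"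
  by (simp add: L_def)

lemma pcompose_monom_monom: "pcompose (monom a k) (monom 1 m) = monom (a::'a::comm_ring_1) (k*m)"
proof (induction k)
  case 0
  then show ?case by (simp add: monom_0)
next
  case (Suc k)
  have "monom a (Suc k) = monom a k * monom 1 1" by (simp add: mult_monom)
  moreover have "pcompose (monom (1::'a) 1) (monom 1 m) = monom 1 m"
    by (simp add: monom_Suc pcompose_pCons monom_0)
  ultimately have "pcompose (monom a (Suc k)) (monom 1 m) = monom a (k*m) * monom 1 m"
    using Suc by (simp only: pcompose_mult)
  then show ?case by (simp add: mult_monom add.commute)
qed

lemma psi_L:
  assumes "vld c b p"
  shows "psi c (L c b p) = monom 1 (nat (wi c b)) * pcompose p (monom 1 (nat (wi c c)))"
proof (cases "p = 0")
  case True then show ?thesis by simp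
next
  case False
  then have nn: "\<And>s. s \<le> degree p \<Longrightarrow> nonneg (lnv c b (int s))" using assms by (simp add: vld_def)
  have b0: "nonneg b" using nn[of 0] by simp
  have wt: "wt c (mnv (lnv c b (int s))) = nat (wi c b) + s * nat (wi c c)" if "s \<le> degree p" for s
  proof -
    have "int (wt c (mnv (lnv c b (int s)))) = wi c b + int s * wi c c"
      using wt_mnv[OF nn[OF that]] wi_lnv by simp
    also have "\<dots> = int (nat (wi c b) + s * nat (wi c c))"
      using wi_nonneg[OF b0, of c] wi_cc[of c] by simp
    finally show ?thesis by (simp only: of_nat_eq_iff)
  qed
  have "psi c (L c b p) = (\<Sum>s\<le>degree p. monom (coeff p s) (nat (wi c b) + s * nat (wi c c)))"
    unfolding L_def psi_sum psi_single by (rule sum.cong) (simp_all add: wt)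
  also have "\<dots> = monom 1 (nat (wi c b)) * (\<Sum>s\<le>degree p. pcompose (monom (coeff p s) s) (monom 1 (nat (wi c c))))"
    by (simp add: pcompose_monom_monom sum_distrib_left mult_monom)
  also have "\<dots> = monom 1 (nat (wi c b)) * pcompose p (monom 1 (nat (wi c c)))"
    by (simp add: pcompose_sum[symmetric] poly_as_sum_of_monoms)
  finally show ?thesis .
qed

lemma keys_L: "Poly_Mapping.keys (L c b p) \<subseteq> {mnv (lnv c b (int s)) | s. s \<le> degree p}"
proof
  fix k assume "k \<in> Poly_Mapping.keys (L c b p)"
  then obtain s where "s \<le> degree p" "k \<in> Poly_Mapping.keys (Poly_Mapping.single (mnv (lnv c b (int s))) (coeff p s))"
    unfolding L_def using keys_sum by fastforce
  then show "k \<in> {mnv (lnv c b (int s)) | s. s \<le> degree p}"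
    by (auto split: if_splits)
qed





lemma omega_add: "omega xi (\<lambda>j. a j + b j) = (\<lambda>k. omega xi a k + omega xi b k)"
  by (auto simp: omega_def idot_def sum.distrib algebra_simps fun_eq_iff)

lemma omega_diff: "omega xi (\<lambda>j. a j - b j) = (\<lambda>k. omega xi a k - omega xi b k)"
  by (auto simp: omega_def idot_def sum_subtractf algebra_simps fun_eq_iff)

lemma omega_smult: "omega xi (\<lambda>j. s * a j) = (\<lambda>k. s * omega xi a k)"
  by (auto simp: omega_def idot_def sum_distrib_left algebra_simps fun_eq_iff)

lemma omega_zero: "omega xi (\<lambda>j. 0) = (\<lambda>k. 0)"
  by (auto simp: omega_def idot_def fun_eq_iff)

lemma omega_lnv:
  assumes "\<forall>i<CARD('n::finite)-1. idot (xi i) c = 0"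
  shows "omega xi (lnv c b s) = omega xi (b :: 'n \<Rightarrow> int)"
proof -
  have "omega xi (lnv c b s) = (\<lambda>k. omega xi b k + s * omega xi c k)"
    unfolding lnv_def omega_add omega_smult by simp
  moreover have "omega xi c = (\<lambda>k. 0)" using assms by (auto simp: omega_def fun_eq_iff)
  ultimately show ?thesis by simp
qed

lemma Rw_iff: "P \<in> Rw xi v \<longleftrightarrow> (\<forall>k\<in>Poly_Mapping.keys P. omega xi (iv k) = v)"
  by (simp add: Rw_def iv_def)

lemma Rw_zero[simp]: "0 \<in> Rw xi v"
  by (simp add: Rw_iff)

lemma Rw_add: "P \<in> Rw xi v \<Longrightarrow> Q \<in> Rw xi v \<Longrightarrow> P + Q \<in> Rw xi v"
  unfolding Rw_iff using keys_add[of P Q] by (meson Un_iff subsetD)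

lemma Rw_uminus: "- (P::('n::finite \<Rightarrow>\<^sub>0 nat) \<Rightarrow>\<^sub>0 'a::ab_group_add) \<in> Rw xi v" if "P \<in> Rw xi v"
proof -
  have "Poly_Mapping.keys (-P) = Poly_Mapping.keys P" by (auto simp: in_keys_iff)
  then show ?thesis using that unfolding Rw_iff by simp
qed

lemma Rw_diff: "P \<in> Rw xi v \<Longrightarrow> Q \<in> Rw xi v \<Longrightarrow> P - (Q::('n::finite \<Rightarrow>\<^sub>0 nat) \<Rightarrow>\<^sub>0 'a::ab_group_add) \<in> Rw xi v"
  unfolding diff_conv_add_uminus by (intro Rw_add Rw_uminus)

lemma Rw_mult:
  assumes "P \<in> Rw xi a" "Q \<in> Rw xi b"
  shows "P * (Q::('n::finite \<Rightarrow>\<^sub>0 nat) \<Rightarrow>\<^sub>0 'a::comm_ring_1) \<in> Rw xi (\<lambda>j. a j + b j)"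
  unfolding Rw_iff
proof
  fix k assume "k \<in> Poly_Mapping.keys (P * Q)"
  then obtain k1 k2 where "k = k1 + k2" "k1 \<in> Poly_Mapping.keys P" "k2 \<in> Poly_Mapping.keys Q"
    using keys_mult by blast
  then show "omega xi (iv k) = (\<lambda>j. a j + b j)"
    using assms unfolding Rw_iff by (simp add: iv_add omega_add)
qed

lemma L_in_Rw:
  assumes "vld c b p" "\<forall>i<CARD('n::finite)-1. idot (xi i) c = 0"
  shows "L c (b::'n \<Rightarrow> int) p \<in> Rw xi (omega xi b)"
proof (cases "p = 0")
  case True then show ?thesis by simp
next
  case False
  show ?thesis unfolding Rw_iff
  proof
    fix k assume "k \<in> Poly_Mapping.keys (L c b p)"
    then obtain s where s: "s \<le> degree p" "k = mnv (lnv c b (int s))" using keys_L by blast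
    then have "nonneg (lnv c b (int s))" using assms(1) False by (simp add: vld_def)
    then show "omega xi (iv k) = omega xi b" using s by (simp add: iv_mnv omega_lnv[OF assms(2)])
  qed
qed




locale core =
  fixes c :: "'n::finite \<Rightarrow> int" and xi :: "nat \<Rightarrow> 'n \<Rightarrow> int"
  assumes orth: "\<forall>i<CARD('n)-1. idot (xi i) c = 0"
    and ker: "\<And>v. (\<forall>i<CARD('n)-1. idot (xi i) v = 0) \<Longrightarrow> \<exists>s. v = (\<lambda>j. s * c j)"
    and cpos: "\<exists>j. 0 < c j"
begin

lemma same_omega:
  assumes "omega xi a = omega xi b"
  shows "\<exists>s. b = lnv c a s"
proof -
  have "\<forall>i<CARD('n)-1. idot (xi i) (\<lambda>j. b j - a j) = 0"
  proof (intro allI impI)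
    fix i assume i: "i < CARD('n) - 1"
    have "omega xi a i = omega xi b i" using assms by simp
    then have "idot (xi i) a = idot (xi i) b" using i by (simp add: omega_def)
    then show "idot (xi i) (\<lambda>j. b j - a j) = 0"
      by (simp add: idot_def algebra_simps sum_subtractf)
  qed
  then obtain s where "(\<lambda>j. b j - a j) = (\<lambda>j. s * c j)" using ker by blast
  then have "b = lnv c a s" by (auto simp: lnv_def fun_eq_iff algebra_simps dest: fun_cong)
  then show ?thesis by blast
qed

lemma lnv_inj: "lnv c a s = lnv c a t \<Longrightarrow> s = t"
proof -
  assume h: "lnv c a s = lnv c a t"
  obtain j where "0 < c j" using cpos by blast
  moreover have "a j + s * c j = a j + t * c j" using h by (auto simp: lnv_def dest: fun_cong[of _ _ j])
  ultimately show "s = t" by simp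
qed

lemma m_pos: "0 < wi c c"
proof -
  obtain j where j: "0 < c j" using cpos by blast
  have "max 0 (c j) * c j \<le> (\<Sum>i\<in>UNIV. max 0 (c i) * c i)"
    by (rule member_le_sum) (auto simp: max_def)
  moreover have "0 < max 0 (c j) * c j" using j by simp
  ultimately show ?thesis unfolding wi_def by linarith
qed

lemma between:
  assumes "nonneg b" "nonneg (lnv c b N)" "0 \<le> s" "s \<le> N"
  shows "nonneg (lnv c b s)"
  unfolding nonneg_def lnv_def
proof
  fix j
  have "0 \<le> b j" "0 \<le> b j + N * c j" using assms(1,2) by (auto simp: nonneg_def lnv_def)
  show "0 \<le> b j + s * c j"
  proof (cases "0 \<le> c j")
    case True then show ?thesis using \<open>0 \<le> b j\<close> assms(3) by simp
  next
    case False
    then have "N * c j \<le> s * c j" using assms(4) by (simp add: mult_right_mono_neg)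
    then show ?thesis using \<open>0 \<le> b j + N * c j\<close> by linarith
  qed
qed

lemma lookup_L_sum:
  "Poly_Mapping.lookup (L c b p) k = (\<Sum>s\<le>degree p. if mnv (lnv c b (int s)) = k then coeff p s else 0)"
  unfolding L_def lookup_sum lookup_single by (simp add: when_def)

lemma pm_structure:
  assumes "P \<in> Rw xi v" "P \<noteq> 0"
  obtains b p where "P = L c b p" "vld c b p" "coeff p 0 \<noteq> 0" "omega xi b = v" "nonneg b"
proof -
  obtain k0 where k0: "k0 \<in> Poly_Mapping.keys P" using assms(2) by fastforce
  define a where "a = iv k0"
  have oa: "omega xi a = v" using assms(1) k0 unfolding a_def Rw_iff by blast
  define sf where "sf k = (SOME s. iv k = lnv c a s)" for k
  have sf: "iv k = lnv c a (sf k)" if "k \<in> Poly_Mapping.keys P" for k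
  proof -
    have "omega xi a = omega xi (iv k)" using assms(1) that oa unfolding Rw_iff by simp
    then have "\<exists>s. iv k = lnv c a s" using same_omega by blast
    then show ?thesis unfolding sf_def by (rule someI_ex)
  qed
  define S where "S = sf ` Poly_Mapping.keys P"
  have finS: "finite S" "S \<noteq> {}" using k0 by (auto simp: S_def)
  define smin where "smin = Min S"
  define smax where "smax = Max S"
  obtain kmin where kmin: "kmin \<in> Poly_Mapping.keys P" "sf kmin = smin"
    using Min_in[OF finS] unfolding smin_def S_def by auto
  obtain kmax where kmax: "kmax \<in> Poly_Mapping.keys P" "sf kmax = smax"
    using Max_in[OF finS] unfolding smax_def S_def by auto
  define b where "b = lnv c a smin"
  define N where "N = nat (smax - smin)"
  have rng: "smin \<le> sf k \<and> sf k \<le> smax" if "k \<in> Poly_Mapping.keys P" for k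
    using that finS unfolding smin_def smax_def S_def by auto
  have kb: "iv k = lnv c b (sf k - smin)" if "k \<in> Poly_Mapping.keys P" for k
    using sf[OF that] by (simp add: b_def lnv_lnv)
  have Nint: "int N = smax - smin" using rng[OF k0] unfolding N_def by simp
  have b_nn: "nonneg b" using kb[OF kmin(1)] kmin(2) nonneg_iv[of kmin] by simp
  have bN_nn: "nonneg (lnv c b (int N))" using kb[OF kmax(1)] kmax(2) nonneg_iv[of kmax] Nint by simp
  have nn: "nonneg (lnv c b (int s))" if "s \<le> N" for s
    using between[OF b_nn bN_nn] that by simp
  define p where "p = (\<Sum>s\<le>N. monom (Poly_Mapping.lookup P (mnv (lnv c b (int s)))) s)"
  have cp: "coeff p s = (if s \<le> N then Poly_Mapping.lookup P (mnv (lnv c b (int s))) else 0)" for s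
    unfolding p_def by (simp add: coeff_sum coeff_monom)
  have mkmin: "mnv b = kmin" using kb[OF kmin(1)] kmin(2) mnv_iv[of kmin] by simp
  have mkmax: "mnv (lnv c b (int N)) = kmax" using kb[OF kmax(1)] kmax(2) mnv_iv[of kmax] Nint by simp
  have c0: "coeff p 0 \<noteq> 0" using cp[of 0] mkmin kmin(1) by (simp add: in_keys_iff)
  have cN: "coeff p N \<noteq> 0" using cp[of N] mkmax kmax(1) by (simp add: in_keys_iff)
  have dp: "degree p = N"
  proof (rule antisym)
    show "degree p \<le> N" by (rule degree_le) (simp add: cp)
    show "N \<le> degree p" using cN by (rule le_degree)
  qed
  have pnz: "p \<noteq> 0" using c0 by auto
  have vld: "vld c b p" using nn dp by (simp add: vld_def)
  have eq: "P = L c b p"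
  proof (rule poly_mapping_eqI)
    fix k
    show "Poly_Mapping.lookup P k = Poly_Mapping.lookup (L c b p) k"
    proof (cases "\<exists>s0\<le>N. k = mnv (lnv c b (int s0))")
      case True
      then obtain s0 where s0: "s0 \<le> N" "k = mnv (lnv c b (int s0))" by blast
      have "(\<Sum>s\<le>degree p. if mnv (lnv c b (int s)) = k then coeff p s else 0)
          = (\<Sum>s\<le>degree p. if s = s0 then coeff p s else 0)"
      proof (rule sum.cong)
        fix s assume "s \<in> {..degree p}"
        then have "s \<le> N" using dp by simp
        have "mnv (lnv c b (int s)) = k \<longleftrightarrow> s = s0"
        proof
          assume "mnv (lnv c b (int s)) = k"
          then have "lnv c b (int s) = lnv c b (int s0)"
            using s0 mnv_inj nn[OF \<open>s \<le> N\<close>] nn[OF s0(1)] by blast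
          then show "s = s0" using lnv_inj by fastforce
        qed (use s0 in simp)
        then show "(if mnv (lnv c b (int s)) = k then coeff p s else 0) = (if s = s0 then coeff p s else 0)"
          by simp
      qed simp
      also have "\<dots> = coeff p s0" using s0(1) dp by simp
      finally show ?thesis using s0 cp by (simp only: lookup_L_sum) simp
    next
      case False
      have "k \<notin> Poly_Mapping.keys P"
      proof
        assume kk: "k \<in> Poly_Mapping.keys P"
        have "k = mnv (lnv c b (int (nat (sf k - smin))))"
          using kb[OF kk] rng[OF kk] mnv_iv[of k] by simp
        moreover have "nat (sf k - smin) \<le> N" using rng[OF kk] Nint by linarith
        ultimately show False using False by blast
      qed
      moreover have "Poly_Mapping.lookup (L c b p) k = 0"
        unfolding lookup_L_sum using False dp by (intro sum.neutral) auto
      ultimately show ?thesis by (simp add: in_keys_iff)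
    qed
  qed
  have "omega xi b = v" unfolding b_def using omega_lnv[OF orth] oa by simp
  with that eq vld c0 b_nn show ?thesis by blast
qed

end




definition bez :: "'a::field poly \<Rightarrow> 'a poly \<Rightarrow> bool" where
  "bez g h \<longleftrightarrow> (\<exists>u v. u * g + v * h = 1)"

lemma bez_mult:
  assumes "bez g a" "bez g b"
  shows "bez g (a * b)"
proof -
  obtain u1 v1 where 1: "u1 * g + v1 * a = 1" using assms(1) by (auto simp: bez_def)
  obtain u2 v2 where 2: "u2 * g + v2 * b = 1" using assms(2) by (auto simp: bez_def)
  have "(u1 * g + v1 * a) * (u2 * g + v2 * b) = 1" using 1 2 by simp
  then have "(u1 * u2 * g + u1 * v2 * b + v1 * a * u2) * g + (v1 * v2) * (a * b) = 1"
    by (simp add: algebra_simps)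
  then show ?thesis unfolding bez_def by blast
qed

lemma bez_x:
  fixes g :: "'a::field poly"
  assumes "coeff g 0 \<noteq> 0"
  shows "bez g (monom 1 1)"
proof -
  obtain g' where g': "g = pCons (coeff g 0) g'" by (metis pCons_cases coeff_pCons_0)
  have "monom (1::'a) 1 = [:0, 1:]" by (simp add: monom_Suc monom_0)
  have geq: "g = [:coeff g 0:] + monom 1 1 * g'"
    by (subst g') (simp add: monom_Suc monom_0)
  have e: "[:inverse (coeff g 0):] * g + (- [:inverse (coeff g 0):] * g') * monom 1 1
      = [:inverse (coeff g 0):] * [:coeff g 0:]"
    by (subst geq) (simp add: algebra_simps)
  have "[:inverse (coeff g 0):] * [:coeff g 0:] = 1"
    using assms by (simp add: one_pCons)
  with e have "[:inverse (coeff g 0):] * g + (- [:inverse (coeff g 0):] * g') * monom 1 1 = 1" by simp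
  then show ?thesis unfolding bez_def by blast
qed

lemma bez_monom:
  fixes g :: "'a::field poly"
  assumes "coeff g 0 \<noteq> 0"
  shows "bez g (monom 1 k)"
proof (induction k)
  case 0
  then show ?case unfolding bez_def by (rule exI[of _ 0], rule exI[of _ 1]) (simp add: monom_0 one_pCons)
next
  case (Suc k)
  have "monom (1::'a) (Suc k) = monom 1 k * monom 1 1" by (simp add: mult_monom)
  then show ?case using bez_mult[OF Suc bez_x[OF assms]] by simp
qed


lemma bez_of_cop:
  fixes g h :: "'a::field poly"
  assumes g0: "g \<noteq> 0" and cop: "\<And>f. f dvd g \<Longrightarrow> f dvd h \<Longrightarrow> is_unit f"
  shows "bez g h"
proof -
  define I where "I = {p. \<exists>u v. p = u * g + v * h}"
  have gI: "g \<in> I" unfolding I_def by (rule CollectI, rule exI[of _ 1], rule exI[of _ 0]) simp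
  have ex: "\<exists>n. \<exists>p\<in>I. p \<noteq> 0 \<and> degree p = n" using gI g0 by blast
  define n where "n = (LEAST n. \<exists>p\<in>I. p \<noteq> 0 \<and> degree p = n)"
  obtain r where r: "r \<in> I" "r \<noteq> 0" "degree r = n"
    using LeastI_ex[OF ex] unfolding n_def by blast
  have minr: "degree r \<le> degree p" if "p \<in> I" "p \<noteq> 0" for p
    using that r(3) unfolding n_def by (auto intro: Least_le)
  obtain u v where uv: "r = u * g + v * h" using r(1) unfolding I_def by blast
  have dvd: "r dvd x" if xI: "x \<in> I" for x
  proof -
    obtain u' v' where x: "x = u' * g + v' * h" using xI unfolding I_def by blast
    have "x mod r = x - (x div r) * r" by (simp add: minus_div_mult_eq_mod)
    also have "\<dots> = (u' - (x div r) * u) * g + (v' - (x div r) * v) * h"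
      unfolding x uv by (simp add: algebra_simps)
    finally have "x mod r \<in> I" unfolding I_def by blast
    moreover have "x mod r = 0"
    proof (rule ccontr)
      assume "x mod r \<noteq> 0"
      then have "degree (x mod r) < degree r" using degree_mod_less'[OF r(2)] by blast
      moreover have "degree r \<le> degree (x mod r)" using minr \<open>x mod r \<in> I\<close> \<open>x mod r \<noteq> 0\<close> by blast
      ultimately show False by simp
    qed
    then show ?thesis by (simp add: mod_eq_0_iff_dvd)
  qed
  have hI: "h \<in> I" unfolding I_def by (rule CollectI, rule exI[of _ 0], rule exI[of _ 1]) simp
  have "is_unit r" using cop dvd[OF gI] dvd[OF hI] by blast
  then obtain k where k: "1 = r * k" by (auto elim: dvdE)
  have "(k * u) * g + (k * v) * h = 1" using k uv by (simp add: algebra_simps)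
  then show ?thesis unfolding bez_def by blast
qed

lemma bezout_deg:
  fixes g h q :: "'a::field poly"
  assumes g0: "g \<noteq> 0" and cop: "bez g h" and dh: "degree h + (degree g - 1) \<le> N"
    and dq: "degree q \<le> N"
  shows "\<exists>a b. q = g * a + h * b \<and> (a = 0 \<or> degree a + degree g \<le> N) \<and> degree b \<le> degree g - 1"
proof -
  obtain u v where uv: "u * g + v * h = 1" using cop unfolding bez_def by blast
  define b where "b = (q * v) mod g"
  define a where "a = q * u + h * ((q * v) div g)"
  have eq: "q = g * a + h * b"
  proof -
    have dm: "g * ((q * v) div g) + (q * v) mod g = q * v"
      by (rule mult_div_mod_eq)
    have "g * a + h * b = q * (u * g) + (h * (g * ((q * v) div g)) + h * ((q * v) mod g))"
      unfolding a_def b_def by (simp add: algebra_simps)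
    also have "h * (g * ((q * v) div g)) + h * ((q * v) mod g) = h * (q * v)"
      by (metis dm distrib_left)
    also have "q * (u * g) + h * (q * v) = q * (u * g + v * h)" by (simp add: algebra_simps)
    finally show ?thesis using uv by simp
  qed
  have db: "degree b \<le> degree g - 1"
    using degree_mod_less[OF g0, of "q * v"] unfolding b_def by auto
  have dhb: "degree (h * b) \<le> N"
    using degree_mult_le[of h b] db dh by linarith
  have dga: "degree (g * a) \<le> N"
  proof -
    have "g * a = q - h * b" using eq by simp
    then have "degree (g * a) \<le> max (degree q) (degree (h * b))"
      by (simp add: degree_diff_le_max)
    then show ?thesis using dq dhb by simp
  qed
  have "a = 0 \<or> degree a + degree g \<le> N"
  proof (cases "a = 0")
    case False
    then have "degree (g * a) = degree g + degree a" using g0 by (simp add: degree_mult_eq)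
    then show ?thesis using dga by simp
  qed simp
  then show ?thesis using eq db by blast
qed




definition cmv :: "('n \<Rightarrow> int) \<Rightarrow> ('n \<Rightarrow> int)" where
  "cmv c = (\<lambda>j. max 0 (- c j))"

lemma wi_cmv: "wi c (\<lambda>j. k * cmv c j) = 0"
  unfolding wi_def cmv_def by (rule sum.neutral) (auto simp: max_def)

lemma min_le_lnv:
  assumes "0 \<le> s" "s \<le> N"
  shows "min (b j) (lnv c b N j) \<le> lnv c b s j"
proof (cases "0 \<le> c j")
  case True then show ?thesis using assms by (simp add: lnv_def)
next
  case False
  then have "N * c j \<le> s * c j" using assms(2) by (simp add: mult_right_mono_neg)
  then show ?thesis by (simp add: lnv_def)
qed

lemma vld_dcm:
  assumes "degree p \<le> k"
  shows "vld c (\<lambda>j. int k * cmv c j) p"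
  unfolding vld_def nonneg_def lnv_def cmv_def
proof (intro impI allI)
  fix s j assume s: "s \<le> degree p"
  show "0 \<le> int k * max 0 (- c j) + int s * c j"
  proof (cases "0 \<le> c j")
    case True then show ?thesis by simp
  next
    case False
    have "int s * c j \<ge> int k * c j" using s assms False by (simp add: mult_right_mono_neg)
    then show ?thesis using False by simp
  qed
qed

lemma Rw_unique:
  assumes "P \<in> Rw xi a" "P \<in> Rw xi b" "P \<noteq> 0"
  shows "a = b"
proof -
  obtain k where "k \<in> Poly_Mapping.keys P" using assms(3) by fastforce
  then show ?thesis using assms(1,2) unfolding Rw_iff by metis
qed

lemma psi_dvd_one:
  assumes "F dvd (1 :: ('n::finite \<Rightarrow>\<^sub>0 nat) \<Rightarrow>\<^sub>0 'a::field)"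
  shows "psi c F dvd 1"
proof -
  obtain K where "1 = F * K" using assms by (auto elim: dvdE)
  then have "1 = psi c F * psi c K" by (metis psi_mult psi_one)
  then show ?thesis by (rule dvdI)
qed

context core
begin

lemma psi_L_nz:
  assumes "vld c b p" "p \<noteq> (0::'a::field poly)"
  shows "psi c (L c b p) \<noteq> 0"
proof -
  have "degree (monom (1::'a) (nat (wi c c))) > 0" using m_pos by (simp add: degree_monom_eq)
  then have "pcompose p (monom 1 (nat (wi c c))) \<noteq> 0" using assms(2) pcompose_eq_0_iff by blast
  then show ?thesis unfolding psi_L[OF assms(1)] by simp
qed

lemma psi_inj:
  assumes "P \<in> Rw xi v" "Q \<in> Rw xi v" "psi c P = psi c (Q :: ('n \<Rightarrow>\<^sub>0 nat) \<Rightarrow>\<^sub>0 'a::field)"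
  shows "P = Q"
proof (rule ccontr)
  assume "P \<noteq> Q"
  then have nz: "P - Q \<noteq> 0" by simp
  have "P - Q \<in> Rw xi v" using assms by (simp add: Rw_diff)
  then obtain b p where bp: "P - Q = L c b p" "vld c b p" "coeff p 0 \<noteq> 0"
    using pm_structure nz by metis
  have "p \<noteq> 0" using bp(3) by auto
  then have "psi c (P - Q) \<noteq> 0" using psi_L_nz[OF bp(2)] bp(1) by simp
  then show False using assms(3) by (simp add: psi_diff)
qed

lemma G_structure:
  assumes G: "G \<in> Rw xi w" and nm: "\<not> (\<exists>m. m \<noteq> 0 \<and> Poly_Mapping.single m (1::'a::field) dvd G)"
  obtains g where "G = L c (\<lambda>j. int (degree g) * cmv c j) g" "vld c (\<lambda>j. int (degree g) * cmv c j) g"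
    "coeff g 0 \<noteq> 0" "G \<noteq> 0"
proof -
  have Gnz: "G \<noteq> 0"
  proof
    assume "G = 0"
    moreover have "Poly_Mapping.single (undefined::'n) (1::nat) \<noteq> 0"
      by (metis lookup_single_eq lookup_zero one_neq_zero)
    ultimately show False using nm by auto
  qed
  obtain b g where bg: "G = L c b g" "vld c b g" "coeff g 0 \<noteq> 0" "omega xi b = w" "nonneg b"
    using pm_structure[OF G Gnz] by metis
  have gnz: "g \<noteq> 0" using bg(3) by auto
  define d where "d = degree g"
  have nn: "nonneg (lnv c b (int s))" if "s \<le> d" for s using bg(2) gnz that by (simp add: vld_def d_def)
  define mn where "mn = (\<lambda>j. min (b j) (lnv c b (int d) j))"
  have mn_nn: "nonneg mn" using bg(5) nn[of d] by (simp add: mn_def nonneg_def)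
  have mn_le: "mn j \<le> lnv c b (int s) j" if "s \<le> d" for s j
    unfolding mn_def by (rule min_le_lnv) (use that in auto)
  define b' where "b' = (\<lambda>j. b j - mn j)"
  have nn': "nonneg (lnv c b' (int s))" if "s \<le> d" for s
    using mn_le[OF that] by (simp add: nonneg_def lnv_def b'_def algebra_simps)
  have eqG: "Poly_Mapping.single (mnv mn) 1 * L c b' g = G"
  proof -
    have "Poly_Mapping.single (mnv mn) 1 * L c b' g
        = (\<Sum>s\<le>d. Poly_Mapping.single (mnv mn + mnv (lnv c b' (int s))) (coeff g s))"
      unfolding L_def d_def sum_distrib_left mult_single by (simp only: mult_1_left)
    also have "\<dots> = (\<Sum>s\<le>d. Poly_Mapping.single (mnv (lnv c b (int s))) (coeff g s))"
    proof (rule sum.cong)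
      fix s assume "s \<in> {..d}"
      then have "mnv mn + mnv (lnv c b' (int s)) = mnv (\<lambda>j. mn j + lnv c b' (int s) j)"
        using mnv_add[OF mn_nn nn'[of s]] by simp
      also have "(\<lambda>j. mn j + lnv c b' (int s) j) = lnv c b (int s)"
        by (simp add: lnv_def b'_def fun_eq_iff)
      finally show "Poly_Mapping.single (mnv mn + mnv (lnv c b' (int s))) (coeff g s) =
          Poly_Mapping.single (mnv (lnv c b (int s))) (coeff g s)" by simp
    qed simp
    also have "\<dots> = G" unfolding bg(1) L_def d_def ..
    finally show ?thesis .
  qed
  have "Poly_Mapping.single (mnv mn) 1 dvd G" using dvdI[OF eqG[symmetric]] .
  then have "mnv mn = 0" using nm by blast
  then have mn0: "mn j = 0" for j
  proof -
    have "Poly_Mapping.lookup (mnv mn) j = 0" using \<open>mnv mn = 0\<close> by simp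
    then have "nat (mn j) = 0" by simp
    then have "mn j \<le> 0" by simp
    moreover have "0 \<le> mn j" using mn_nn by (simp add: nonneg_def)
    ultimately show ?thesis by linarith
  qed
  have bd: "b = (\<lambda>j. int d * cmv c j)"
  proof
    fix j
    show "b j = int d * cmv c j"
    proof (cases "0 \<le> c j")
      case True
      then have "mn j = b j" by (simp add: mn_def lnv_def)
      then show ?thesis using mn0[of j] True by (simp add: cmv_def)
    next
      case False
      then have "mn j = b j + int d * c j" by (simp add: mn_def lnv_def mult_nonneg_nonpos)
      then show ?thesis using mn0[of j] False by (simp add: cmv_def)
    qed
  qed
  show ?thesis using that bg Gnz unfolding bd d_def by blast
qed

end




lemma wi_diff: "wi c (\<lambda>j. a j - b j) = wi c a - wi c b"
  by (simp add: wi_def algebra_simps sum_subtractf)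

lemma wi_add: "wi c (\<lambda>j. a j + b j) = wi c a + wi c b"
  by (simp add: wi_def algebra_simps sum.distrib)

context core
begin

lemma cop_transfer:
  fixes g h :: "'a::field poly"
  assumes G: "G = L c (\<lambda>j. int (degree g) * cmv c j) g" "coeff g 0 \<noteq> 0"
    and H: "H = L c \<gamma> h" "vld c \<gamma> h" "h \<noteq> 0" "nonneg \<gamma>"
    and cop: "mp_coprime G H"
  shows "bez g h"
proof (rule bez_of_cop)
  show g0: "g \<noteq> 0" using G(2) by auto
  fix f assume fg: "f dvd g" and fh: "f dvd h"
  obtain g1 where g1: "g = f * g1" using fg by (auto elim: dvdE)
  obtain h1 where h1: "h = f * h1" using fh by (auto elim: dvdE)
  have f0: "f \<noteq> 0" and g10: "g1 \<noteq> 0" using g0 g1 by auto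
  have h10: "h1 \<noteq> 0" using H(3) h1 by auto
  define df where "df = degree f"
  have dg: "degree g = df + degree g1" using g1 f0 g10 by (simp add: degree_mult_eq df_def)
  have dh: "degree h = df + degree h1" using h1 f0 h10 by (simp add: degree_mult_eq df_def)
  define M where "M = monom (1::'a) (nat (wi c c))"
  define F where "F = L c (\<lambda>j. int df * cmv c j) f"
  define G1 where "G1 = L c (\<lambda>j. int (degree g1) * cmv c j) g1"
  define H1 where "H1 = L c (\<lambda>j. \<gamma> j - int df * cmv c j) h1"
  have vF: "vld c (\<lambda>j. int df * cmv c j) f" by (rule vld_dcm) (simp add: df_def)
  have vG1: "vld c (\<lambda>j. int (degree g1) * cmv c j) g1" by (rule vld_dcm) simp
  have vG: "vld c (\<lambda>j. int (degree g) * cmv c j) g" by (rule vld_dcm) simp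
  have vH1: "vld c (\<lambda>j. \<gamma> j - int df * cmv c j) h1"
    unfolding vld_def nonneg_def
  proof (intro impI allI)
    fix s j assume s: "s \<le> degree h1"
    show "0 \<le> lnv c (\<lambda>j. \<gamma> j - int df * cmv c j) (int s) j"
    proof (cases "0 \<le> c j")
      case True
      then show ?thesis using H(4) by (simp add: lnv_def cmv_def nonneg_def)
    next
      case False
      have all: "\<forall>s\<le>degree h. nonneg (lnv c \<gamma> (int s))" using H(2,3) by (simp add: vld_def)
      have "nonneg (lnv c \<gamma> (int (df + s)))" using all[rule_format, of "df + s"] s dh by simp
      then have "0 \<le> \<gamma> j + int (df + s) * c j" by (simp add: nonneg_def lnv_def)
      then show ?thesis using False by (simp add: lnv_def cmv_def algebra_simps)
    qed
  qed
  have psiF: "psi c F = pcompose f M" unfolding F_def M_def psi_L[OF vF] wi_cmv by simp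
  have psiG1: "psi c G1 = pcompose g1 M" unfolding G1_def M_def psi_L[OF vG1] wi_cmv by simp
  have psiG: "psi c G = pcompose g M" unfolding G(1) M_def psi_L[OF vG] wi_cmv by simp
  have psiH1: "psi c H1 = monom 1 (nat (wi c \<gamma>)) * pcompose h1 M"
    unfolding H1_def M_def psi_L[OF vH1] wi_diff wi_cmv by simp
  have psiH: "psi c H = monom 1 (nat (wi c \<gamma>)) * pcompose h M"
    unfolding H(1) M_def psi_L[OF H(2)] by simp
  have RG: "G \<in> Rw xi (omega xi (\<lambda>j. int (degree g) * cmv c j))"
    unfolding G(1) by (rule L_in_Rw[OF vG orth])
  have RFG1: "F * G1 \<in> Rw xi (omega xi (\<lambda>j. int (degree g) * cmv c j))"
  proof -
    have "F * G1 \<in> Rw xi (\<lambda>k. omega xi (\<lambda>j. int df * cmv c j) k + omega xi (\<lambda>j. int (degree g1) * cmv c j) k)"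
      unfolding F_def G1_def by (intro Rw_mult L_in_Rw[OF _ orth] vF vG1)
    moreover have "(\<lambda>k. omega xi (\<lambda>j. int df * cmv c j) k + omega xi (\<lambda>j. int (degree g1) * cmv c j) k)
        = omega xi (\<lambda>j. int (degree g) * cmv c j)"
      unfolding omega_smult dg by (simp add: algebra_simps)
    ultimately show ?thesis by simp
  qed
  have "F * G1 = G"
    by (rule psi_inj[OF RFG1 RG]) (simp add: psi_mult psiF psiG1 psiG g1 pcompose_mult)
  then have dG: "F dvd G" by (metis dvd_triv_left)
  have RH: "H \<in> Rw xi (omega xi \<gamma>)" unfolding H(1) by (rule L_in_Rw[OF H(2) orth])
  have RFH1: "F * H1 \<in> Rw xi (omega xi \<gamma>)"
  proof -
    have "F * H1 \<in> Rw xi (\<lambda>k. omega xi (\<lambda>j. int df * cmv c j) k + omega xi (\<lambda>j. \<gamma> j - int df * cmv c j) k)"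
      unfolding F_def H1_def by (intro Rw_mult L_in_Rw[OF _ orth] vF vH1)
    moreover have "(\<lambda>k. omega xi (\<lambda>j. int df * cmv c j) k + omega xi (\<lambda>j. \<gamma> j - int df * cmv c j) k)
        = omega xi \<gamma>"
      unfolding omega_diff omega_smult by simp
    ultimately show ?thesis by simp
  qed
  have "F * H1 = H"
    by (rule psi_inj[OF RFH1 RH]) (simp add: psi_mult psiF psiH1 psiH h1 pcompose_mult algebra_simps)
  then have dH: "F dvd H" by (metis dvd_triv_left)
  have "F dvd 1" using cop dG dH unfolding mp_coprime_def by blast
  then have "psi c F dvd 1" by (rule psi_dvd_one)
  then have u: "is_unit (pcompose f M)" using psiF by simp
  have dM: "degree M = nat (wi c c)" unfolding M_def by (simp add: degree_monom_eq)
  have "pcompose f M \<noteq> 0" using f0 dM m_pos pcompose_eq_0_iff[of M f] by simp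
  then have "degree (pcompose f M) = 0" using u is_unit_iff_degree by blast
  then have "degree f = 0" using dM m_pos by (simp add: degree_pcompose)
  then show "is_unit f" using f0 is_unit_iff_degree by blast
qed

end




lemma beta0_nonneg:
  fixes \<alpha> c :: "'n \<Rightarrow> int" and \<tau> :: real
  assumes tau: "\<forall>j. 0 \<le> of_int (\<alpha> j) + \<tau> * of_int (c j)" and d1: "1 \<le> d"
  shows "nonneg (\<lambda>j. \<alpha> j + int d * cmv c j + \<lceil>\<tau>\<rceil> * c j)"
    and "nonneg (lnv c (\<lambda>j. \<alpha> j + int d * cmv c j + \<lceil>\<tau>\<rceil> * c j) (int (d - 1)))"
proof -
  have t1: "\<tau> \<le> real_of_int \<lceil>\<tau>\<rceil>" by (rule le_of_int_ceiling)
  have t2: "real_of_int \<lceil>\<tau>\<rceil> \<le> \<tau> + 1" using ceiling_correct[of \<tau>] by linarith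
  have main: "0 \<le> \<alpha> j + int d * cmv c j + \<lceil>\<tau>\<rceil> * c j \<and> 0 \<le> \<alpha> j + int d * cmv c j + \<lceil>\<tau>\<rceil> * c j + int (d - 1) * c j" for j
  proof -
    define t where "t = real_of_int \<lceil>\<tau>\<rceil>"
    define cj where "cj = real_of_int (c j)"
    define a where "a = real_of_int (\<alpha> j)"
    define cm where "cm = real_of_int (cmv c j)"
    have A: "0 \<le> a + \<tau> * cj" using tau by (simp add: a_def cj_def)
    have P2: "t * cj = \<tau> * cj + (t - \<tau>) * cj" by (simp add: algebra_simps)
    have tt: "t - \<tau> \<le> 1" "0 \<le> t - \<tau>" unfolding t_def using t1 t2 by linarith+
    have e1: "real_of_int (\<alpha> j + int d * cmv c j + \<lceil>\<tau>\<rceil> * c j) = a + real d * cm + t * cj"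
      by (simp add: a_def t_def cj_def cm_def)
    have e2: "real_of_int (\<alpha> j + int d * cmv c j + \<lceil>\<tau>\<rceil> * c j + int (d - 1) * c j)
        = a + real d * cm + t * cj + (real d - 1) * cj"
      using d1 by (simp add: a_def t_def cj_def cm_def of_nat_diff)
    have "0 \<le> a + real d * cm + t * cj \<and> 0 \<le> a + real d * cm + t * cj + (real d - 1) * cj"
    proof (cases "0 \<le> c j")
      case True
      then have cm0: "cm = 0" by (simp add: cmv_def cm_def)
      have cj0: "0 \<le> cj" using True by (simp add: cj_def)
      have "0 \<le> (t - \<tau>) * cj" using tt(2) cj0 by simp
      moreover have "0 \<le> (real d - 1) * cj" using d1 cj0 by simp
      ultimately show ?thesis using A P2 cm0 by simp
    next
      case False
      then have cm1: "cm = - cj" by (simp add: cmv_def cm_def cj_def)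
      have cjn: "cj < 0" using False by (simp add: cj_def)
      have Q: "(t - \<tau>) * cj \<ge> 1 * cj" by (rule mult_right_mono_neg[OF tt(1)]) (use cjn in simp)
      have R: "real d * (- cj) \<ge> 1 * (- cj)" by (rule mult_right_mono) (use d1 cjn in simp_all)
      have S: "real d * (- cj) + (real d - 1) * cj = - cj" by (simp add: algebra_simps)
      show ?thesis using A P2 Q R S cm1 by simp
    qed
    then show ?thesis using e1 e2 by (metis of_int_0_le_iff)
  qed
  show "nonneg (\<lambda>j. \<alpha> j + int d * cmv c j + \<lceil>\<tau>\<rceil> * c j)" using main by (simp add: nonneg_def)
  show "nonneg (lnv c (\<lambda>j. \<alpha> j + int d * cmv c j + \<lceil>\<tau>\<rceil> * c j) (int (d - 1)))"
    using main by (simp add: nonneg_def lnv_def)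
qed




lemma nat_lin: "0 \<le> x \<Longrightarrow> 0 \<le> y \<Longrightarrow> nat (x + int k * y) = nat x + k * nat y"
  by (subst nat_add_distrib) (auto simp: nat_mult_distrib)

lemma single0_Rw: "Poly_Mapping.single 0 a \<in> Rw xi (\<lambda>k. 0)"
  unfolding Rw_iff by (simp add: omega_zero)

lemma mnv_zero: "mnv (\<lambda>j. 0) = (0 :: 'n::finite \<Rightarrow>\<^sub>0 nat)"
  by (rule poly_mapping_eqI) simp

context core
begin

lemma case_d0:
  fixes G X :: "('n \<Rightarrow>\<^sub>0 nat) \<Rightarrow>\<^sub>0 'a::field"
  assumes G: "G = L c (\<lambda>j. int (degree g) * cmv c j) g" "coeff g 0 \<noteq> 0" "degree g = 0"
    and Gw: "G \<in> Rw xi w" and X: "X \<in> Rw xi (\<lambda>j. w j + z j + i j)"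
  shows "\<exists>A B. A \<in> Rw xi (\<lambda>j. z j + i j) \<and> B \<in> Rw xi (\<lambda>j. w j + i j) \<and> X = G * A + H * B"
proof -
  define g0 where "g0 = coeff g 0"
  have Gs: "G = Poly_Mapping.single 0 g0"
    using G(1,3) unfolding L_def g0_def by (simp add: mnv_zero)
  have w0: "w = (\<lambda>k. 0)"
  proof -
    have "G \<in> Rw xi (\<lambda>k. 0)" using Gs single0_Rw by simp
    moreover have "G \<noteq> 0" using Gs G(2) g0_def by (metis lookup_single_eq lookup_zero)
    ultimately show ?thesis using Rw_unique Gw by blast
  qed
  define A where "A = Poly_Mapping.single 0 (inverse g0) * X"
  have "A \<in> Rw xi (\<lambda>j. 0 + (w j + z j + i j))" unfolding A_def by (rule Rw_mult[OF single0_Rw X])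
  then have RA: "A \<in> Rw xi (\<lambda>j. z j + i j)" using w0 by simp
  have "G * A = Poly_Mapping.single 0 (g0 * inverse g0) * X"
    unfolding Gs A_def by (simp add: mult.assoc[symmetric] mult_single)
  also have "\<dots> = X" using G(2) g0_def by simp
  finally have "X = G * A + H * 0" by simp
  then show ?thesis using RA Rw_zero by blast
qed

lemma case_dpos:
  fixes G H X :: "('n \<Rightarrow>\<^sub>0 nat) \<Rightarrow>\<^sub>0 'a::field"
  assumes G: "G = L c (\<lambda>j. int (degree g) * cmv c j) g" "coeff g 0 \<noteq> 0" "1 \<le> degree g"
    and Gw: "G \<in> Rw xi w" and Hz: "H \<in> Rw xi z" and cop: "mp_coprime G H"
    and al: "omega xi \<alpha> = i" and tau: "\<forall>j. 0 \<le> of_int (\<alpha> j) + (\<tau>::real) * of_int (c j)"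
    and X: "X \<in> Rw xi (\<lambda>j. w j + z j + i j)" and Xnz: "X \<noteq> 0"
  shows "\<exists>A B. A \<in> Rw xi (\<lambda>j. z j + i j) \<and> B \<in> Rw xi (\<lambda>j. w j + i j) \<and> X = G * A + H * B"
proof -
  define d where "d = degree g"
  define dc where "dc = (\<lambda>j. int d * cmv c j)"
  define M where "M = monom (1::'a) (nat (wi c c))"
  define m' where "m' = nat (wi c c)"
  have g0: "g \<noteq> 0" using G(2) by auto
  have vG: "vld c dc g" unfolding dc_def d_def by (rule vld_dcm) simp
  have psiG: "psi c G = pcompose g M"
    unfolding G(1) M_def psi_L[OF vG[unfolded dc_def d_def]] wi_cmv by simp
  have wdc: "w = omega xi dc"
  proof -
    have "G \<in> Rw xi (omega xi dc)" unfolding G(1) dc_def d_def by (rule L_in_Rw[OF vG[unfolded dc_def d_def] orth])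
    moreover have "G \<noteq> 0"
    proof
      assume "G = 0"
      then have "psi c G = 0" by simp
      then show False using psi_L_nz[OF vG[unfolded dc_def d_def] g0] G(1) by simp
    qed
    ultimately show ?thesis using Rw_unique Gw by blast
  qed
  have dM: "degree M = m'" unfolding M_def m'_def by (simp add: degree_monom_eq)
  have m'pos: "0 < m'" using m_pos unfolding m'_def by simp
  have Hnz: "H \<noteq> 0"
  proof
    assume "H = 0"
    then have "G dvd 1" using cop unfolding mp_coprime_def by auto
    then have "psi c G dvd 1" by (rule psi_dvd_one)
    then have u: "is_unit (pcompose g M)" using psiG by simp
    have "pcompose g M \<noteq> 0" using g0 dM m'pos pcompose_eq_0_iff[of M g] by simp
    then have "degree (pcompose g M) = 0" using u is_unit_iff_degree by blast
    then show False using dM m'pos G(3) by (simp add: degree_pcompose)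
  qed
  obtain \<gamma> h where Hs: "H = L c \<gamma> h" "vld c \<gamma> h" "coeff h 0 \<noteq> 0" "omega xi \<gamma> = z" "nonneg \<gamma>"
    using pm_structure[OF Hz Hnz] by metis
  have h0: "h \<noteq> 0" using Hs(3) by auto
  obtain \<gamma>X q where Xs: "X = L c \<gamma>X q" "vld c \<gamma>X q" "coeff q 0 \<noteq> 0"
      "omega xi \<gamma>X = (\<lambda>j. w j + z j + i j)" "nonneg \<gamma>X"
    using pm_structure[OF X Xnz] by metis
  have q0: "q \<noteq> 0" using Xs(3) by auto
  have bgh: "bez g h" by (rule cop_transfer[OF G(1,2) Hs(1,2) h0 Hs(5) cop])
  define \<beta>0 where "\<beta>0 = (\<lambda>j. \<alpha> j + int d * cmv c j + \<lceil>\<tau>\<rceil> * c j)"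
  have b0nn: "nonneg \<beta>0" and b1nn: "nonneg (lnv c \<beta>0 (int (d - 1)))"
    using beta0_nonneg[OF tau, of d] G(3) unfolding \<beta>0_def d_def by auto
  have ob0: "omega xi \<beta>0 = (\<lambda>j. w j + i j)"
  proof -
    have "\<beta>0 = lnv c (\<lambda>j. \<alpha> j + dc j) \<lceil>\<tau>\<rceil>" by (simp add: \<beta>0_def lnv_def dc_def fun_eq_iff)
    then have "omega xi \<beta>0 = omega xi (\<lambda>j. \<alpha> j + dc j)" using omega_lnv[OF orth] by simp
    also have "\<dots> = (\<lambda>j. w j + i j)" unfolding omega_add al wdc by (simp add: add.commute)
    finally show ?thesis .
  qed
  have "omega xi (\<lambda>j. \<gamma> j + \<beta>0 j) = omega xi \<gamma>X"
    unfolding omega_add Xs(4) Hs(4) ob0 by (simp add: fun_eq_iff algebra_simps)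
  then obtain k where k: "(\<lambda>j. \<gamma> j + \<beta>0 j) = lnv c \<gamma>X k" using same_omega by metis
  define k0 where "k0 = min 0 k"
  define \<rho> where "\<rho> = lnv c \<gamma>X k0"
  define k1 where "k1 = nat (- k0)"
  define k2 where "k2 = nat (k - k0)"
  have rX: "\<gamma>X = lnv c \<rho> (int k1)" unfolding \<rho>_def lnv_lnv k1_def k0_def by simp
  have rH: "(\<lambda>j. \<gamma> j + \<beta>0 j) = lnv c \<rho> (int k2)" unfolding \<rho>_def lnv_lnv k2_def k0_def k by simp
  have rnn: "nonneg \<rho>"
  proof (cases "0 \<le> k")
    case True then show ?thesis using Xs(5) by (simp add: \<rho>_def k0_def)
  next
    case False
    then have "\<rho> = (\<lambda>j. \<gamma> j + \<beta>0 j)" by (simp add: \<rho>_def k0_def k)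
    then show ?thesis using Hs(5) b0nn by (simp add: nonneg_def)
  qed
  define e where "e = degree h"
  define N where "N = max (k1 + degree q) (k2 + e + (d - 1))"
  have rN: "nonneg (lnv c \<rho> (int N))"
  proof (cases "N = k1 + degree q")
    case True
    have "lnv c \<rho> (int N) = lnv c \<gamma>X (int (degree q))" unfolding rX lnv_lnv True by simp
    then show ?thesis using Xs(2) q0 by (simp add: vld_def)
  next
    case False
    then have NN: "N = k2 + e + (d - 1)" unfolding N_def by simp
    have "lnv c \<rho> (int N) = (\<lambda>j. lnv c \<gamma> (int e) j + lnv c \<beta>0 (int (d - 1)) j)"
      using fun_cong[OF rH] unfolding NN by (simp add: lnv_def fun_eq_iff algebra_simps)
    moreover have "nonneg (lnv c \<gamma> (int e))" using Hs(2) h0 by (simp add: vld_def e_def)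
    ultimately show ?thesis using b1nn by (simp add: nonneg_def)
  qed
  define q' where "q' = monom 1 k1 * q"
  define h' where "h' = monom 1 k2 * h"
  have dq': "degree q' = k1 + degree q" unfolding q'_def using q0 by (simp add: degree_mult_eq degree_monom_eq)
  have dh': "degree h' = k2 + e" unfolding h'_def e_def using h0 by (simp add: degree_mult_eq degree_monom_eq)
  have bgh': "bez g h'" unfolding h'_def by (rule bez_mult[OF bez_monom[OF G(2)] bgh])
  obtain a b where ab: "q' = g * a + h' * b" "a = 0 \<or> degree a + d \<le> N" "degree b \<le> d - 1"
    using bezout_deg[OF g0 bgh', of N q'] dq' dh' unfolding d_def N_def by auto
  define A where "A = L c (\<lambda>j. \<rho> j - dc j) a"
  define B where "B = L c \<beta>0 b"
  have vA: "vld c (\<lambda>j. \<rho> j - dc j) a"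
    unfolding vld_def
  proof (intro impI allI)
    fix s assume a0: "a \<noteq> 0" and s: "s \<le> degree a"
    have dsN: "d + s \<le> N" using ab(2) a0 s by simp
    have nn: "nonneg (lnv c \<rho> (int (d + s)))" by (rule between[OF rnn rN]) (use dsN in simp_all)
    show "nonneg (lnv c (\<lambda>j. \<rho> j - dc j) (int s))"
      unfolding nonneg_def
    proof
      fix j
      show "0 \<le> lnv c (\<lambda>j. \<rho> j - dc j) (int s) j"
      proof (cases "0 \<le> c j")
        case True then show ?thesis using rnn by (simp add: lnv_def dc_def cmv_def nonneg_def)
      next
        case False
        then show ?thesis using nn by (simp add: lnv_def dc_def cmv_def nonneg_def algebra_simps)
      qed
    qed
  qed
  have vB: "vld c \<beta>0 b"
    unfolding vld_def
  proof (intro impI allI)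
    fix s assume "b \<noteq> 0" "s \<le> degree b"
    then show "nonneg (lnv c \<beta>0 (int s))" using ab(3) by (intro between[OF b0nn b1nn]) simp_all
  qed
  have RA: "A \<in> Rw xi (\<lambda>j. z j + i j)"
  proof -
    have "A \<in> Rw xi (omega xi (\<lambda>j. \<rho> j - dc j))" unfolding A_def by (rule L_in_Rw[OF vA orth])
    moreover have "omega xi \<rho> = omega xi \<gamma>X" unfolding \<rho>_def by (rule omega_lnv[OF orth])
    ultimately show ?thesis unfolding omega_diff Xs(4) wdc[symmetric] by simp
  qed
  have RB: "B \<in> Rw xi (\<lambda>j. w j + i j)" unfolding B_def ob0[symmetric] by (rule L_in_Rw[OF vB orth])
  have RGA: "G * A + H * B \<in> Rw xi (\<lambda>j. w j + z j + i j)"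
  proof -
    have "G * A \<in> Rw xi (\<lambda>j. w j + (z j + i j))" by (rule Rw_mult[OF Gw RA])
    moreover have "H * B \<in> Rw xi (\<lambda>j. z j + (w j + i j))" by (rule Rw_mult[OF Hz RB])
    moreover have "(\<lambda>j. w j + (z j + i j)) = (\<lambda>j. w j + z j + i j)" "(\<lambda>j. z j + (w j + i j)) = (\<lambda>j. w j + z j + i j)"
      by (simp_all add: fun_eq_iff algebra_simps)
    ultimately show ?thesis by (simp add: Rw_add)
  qed
  define E where "E = nat (wi c \<rho>)"
  have wr: "0 \<le> wi c \<rho>" by (rule wi_nonneg[OF rnn])
  have wcc: "0 \<le> wi c c" by (rule wi_cc)
  have pmm: "pcompose (monom 1 k') M = monom 1 (k' * m')" for k'
    unfolding M_def m'_def by (rule pcompose_monom_monom)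
  have psiA: "psi c A = monom 1 E * pcompose a M"
  proof -
    have "psi c A = monom 1 (nat (wi c (\<lambda>j. \<rho> j - dc j))) * pcompose a M"
      unfolding A_def M_def by (rule psi_L[OF vA])
    moreover have "wi c (\<lambda>j. \<rho> j - dc j) = wi c \<rho>" unfolding wi_diff dc_def wi_cmv by simp
    ultimately show ?thesis unfolding E_def by simp
  qed
  have eHB: "nat (wi c \<gamma>) + nat (wi c \<beta>0) = E + k2 * m'"
  proof -
    have "wi c \<gamma> + wi c \<beta>0 = wi c \<rho> + int k2 * wi c c"
      using arg_cong[OF rH, of "wi c"] unfolding wi_add wi_lnv .
    then show ?thesis using wi_nonneg[OF Hs(5), of c] wi_nonneg[OF b0nn, of c] wr wcc
      unfolding E_def m'_def by (simp add: nat_add_distrib[symmetric] nat_lin)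
  qed
  have eX: "nat (wi c \<gamma>X) = E + k1 * m'"
  proof -
    have "wi c \<gamma>X = wi c \<rho> + int k1 * wi c c" unfolding rX wi_lnv ..
    then show ?thesis using wr wcc unfolding E_def m'_def by (simp add: nat_lin)
  qed
  have psiHB: "psi c (H * B) = monom 1 E * pcompose (h' * b) M"
  proof -
    have "psi c (H * B) = monom 1 (nat (wi c \<gamma>)) * pcompose h M * (monom 1 (nat (wi c \<beta>0)) * pcompose b M)"
      unfolding psi_mult Hs(1) B_def psi_L[OF Hs(2)] psi_L[OF vB] M_def ..
    also have "\<dots> = (monom 1 (nat (wi c \<gamma>)) * monom 1 (nat (wi c \<beta>0))) * (pcompose h M * pcompose b M)"
      by (simp only: ac_simps)
    also have "\<dots> = monom 1 (nat (wi c \<gamma>) + nat (wi c \<beta>0)) * (pcompose h M * pcompose b M)"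
      by (simp only: mult_monom mult_1)
    also have "\<dots> = monom 1 E * (monom 1 (k2 * m') * (pcompose h M * pcompose b M))"
      unfolding eHB by (simp only: mult.assoc[symmetric] mult_monom mult_1)
    also have "\<dots> = monom 1 E * pcompose (h' * b) M"
      unfolding h'_def pcompose_mult pmm by (simp add: algebra_simps)
    finally show ?thesis .
  qed
  have psiX: "psi c X = monom 1 E * pcompose q' M"
  proof -
    have "psi c X = monom 1 (nat (wi c \<gamma>X)) * pcompose q M"
      unfolding Xs(1) psi_L[OF Xs(2)] M_def ..
    also have "\<dots> = monom 1 E * pcompose q' M"
      unfolding eX q'_def pcompose_mult pmm by (simp only: mult.assoc[symmetric] mult_monom mult_1)
    finally show ?thesis .
  qed
  have "psi c (G * A + H * B) = psi c G * psi c A + psi c (H * B)"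
    by (simp only: psi_add psi_mult)
  also have "\<dots> = monom 1 E * pcompose (g * a + h' * b) M"
    unfolding psiG psiA psiHB pcompose_add pcompose_mult by (simp add: algebra_simps)
  also have "\<dots> = psi c X" unfolding psiX ab(1) ..
  finally have "G * A + H * B = X" by (rule psi_inj[OF RGA X])
  then show ?thesis using RA RB by metis
qed

end




lemma realvec_nth[simp]: "realvec a $ j = real_of_int (a j)"
  by (simp add: realvec_def)

lemma realvec_inner: "realvec a \<bullet> realvec b = real_of_int (idot a b)"
  by (simp add: inner_vec_def idot_def realvec_def)

lemma ker_real:
  fixes xi :: "nat \<Rightarrow> 'n::finite \<Rightarrow> int"
  assumes li: "lin_indep_family (CARD('n) - 1) xi" and orth: "\<forall>i<CARD('n)-1. idot (xi i) c = 0"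
    and c0: "c \<noteq> (\<lambda>_. 0)" and v: "\<forall>i<CARD('n)-1. idot (xi i) v = 0"
  shows "\<exists>r::real. realvec v = r *\<^sub>R realvec c"
proof -
  define n where "n = CARD('n)"
  define n1 where "n1 = n - 1"
  have n1n: "Suc n1 = n" unfolding n1_def n_def by simp
  define c' where "c' = realvec c"
  have cc: "c' \<bullet> c' \<noteq> 0"
  proof
    assume "c' \<bullet> c' = 0"
    then have "c' = 0" by simp
    then have "c = (\<lambda>_. 0)" unfolding c'_def by (auto simp: fun_eq_iff vec_eq_iff)
    then show False using c0 by simp
  qed
  define f where "f i = (if i < n1 then realvec (xi i) else c')" for i
  have fc: "f i \<bullet> c' = 0" if "i < n1" for i
    using that orth by (simp add: f_def c'_def realvec_inner n1_def n_def)
  have indep: "\<forall>i<n. r i = 0" if r: "(\<Sum>i<n. r i *\<^sub>R f i) = 0" for r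
  proof -
    have "(\<Sum>i<n. r i *\<^sub>R f i) = (\<Sum>i<n1. r i *\<^sub>R f i) + r n1 *\<^sub>R f n1"
      unfolding n1n[symmetric] by simp
    then have eq: "(\<Sum>i<n1. r i *\<^sub>R f i) + r n1 *\<^sub>R c' = 0" using r by (simp add: f_def)
    have "(\<Sum>i<n1. r i *\<^sub>R f i) \<bullet> c' = 0"
      by (simp add: inner_sum_left fc)
    then have "r n1 * (c' \<bullet> c') = 0" using arg_cong[OF eq, of "\<lambda>x. x \<bullet> c'"]
      by (simp add: inner_add_left)
    then have rn1: "r n1 = 0" using cc by simp
    then have "(\<Sum>i<n1. r i *\<^sub>R realvec (xi i)) = 0" using eq by (simp add: f_def)
    then have "\<forall>i<n1. r i = 0" using li unfolding lin_indep_family_def n1_def n_def by blast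
    then show ?thesis using rn1 n1n by (metis less_Suc_eq)
  qed
  have inj: "inj_on f {..<n}"
  proof (rule inj_onI)
    fix i j assume ij: "i \<in> {..<n}" "j \<in> {..<n}" "f i = f j"
    show "i = j"
    proof (rule ccontr)
      assume ne: "i \<noteq> j"
      define r where "r k = (if k = i then 1 else if k = j then -1 else (0::real))" for k
      have "(\<Sum>k<n. r k *\<^sub>R f k) = (\<Sum>k\<in>{i,j}. r k *\<^sub>R f k)"
        by (rule sum.mono_neutral_right) (use ij in \<open>auto simp: r_def\<close>)
      also have "\<dots> = 0" using ne ij(3) by (simp add: r_def)
      finally have "r i = 0" using indep ij(1) by blast
      then show False by (simp add: r_def)
    qed
  qed
  define S where "S = f ` {..<n}"
  have cardS: "card S = n" unfolding S_def using card_image[OF inj] by simp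
  have indS: "independent S"
    unfolding independent_explicit
  proof (intro conjI allI impI)
    show "finite S" by (simp add: S_def)
    fix u assume u: "(\<Sum>x\<in>S. u x *\<^sub>R x) = 0"
    have "(\<Sum>i<n. u (f i) *\<^sub>R f i) = (\<Sum>x\<in>S. u x *\<^sub>R x)"
      unfolding S_def by (rule sum.reindex[OF inj, symmetric, unfolded comp_def])
    then have "\<forall>i<n. u (f i) = 0" using u indep by simp
    then show "\<forall>x\<in>S. u x = 0" by (auto simp: S_def)
  qed
  have spanS: "span S = UNIV"
  proof -
    have "dim (UNIV :: (real^'n) set) \<le> card S" using cardS by (simp add: n_def)
    then have "UNIV \<subseteq> span S" using card_ge_dim_independent[OF _ indS] by blast
    then show ?thesis by blast
  qed
  define k where "k = (realvec v \<bullet> c') / (c' \<bullet> c')"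
  define p where "p = realvec v - k *\<^sub>R c'"
  have porth: "orthogonal p y" if yS: "y \<in> S" for y
  proof -
    obtain i where i: "i < n" "y = f i" using yS by (auto simp: S_def)
    show ?thesis
    proof (cases "i < n1")
      case True
      have "p \<bullet> y = realvec v \<bullet> realvec (xi i) - k * (c' \<bullet> realvec (xi i))"
        using True i by (simp add: p_def f_def inner_diff_left)
      also have "\<dots> = 0" using True v orth
        by (simp add: realvec_inner c'_def inner_commute[of _ "realvec (xi i)"] n1_def n_def)
      finally show ?thesis by (simp add: orthogonal_def)
    next
      case False
      then have "y = c'" using i by (simp add: f_def)
      then have "p \<bullet> y = realvec v \<bullet> c' - k * (c' \<bullet> c')" by (simp add: p_def inner_diff_left)
      also have "\<dots> = 0" using cc by (simp add: k_def)
      finally show ?thesis by (simp add: orthogonal_def)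
    qed
  qed
  have "p \<in> span S" using spanS by simp
  then have "orthogonal p p" using orthogonal_to_span porth by blast
  then have "p = 0" by (simp add: orthogonal_def)
  then show ?thesis unfolding p_def c'_def by auto
qed


lemma ker_int:
  fixes v c :: "'n::finite \<Rightarrow> int"
  assumes prim: "primitive_vec c" and eq: "realvec v = r *\<^sub>R realvec c"
  shows "\<exists>s::int. v = (\<lambda>j. s * c j)"
proof -
  have c0: "c \<noteq> (\<lambda>_. 0)" using prim by (simp add: primitive_vec_def)
  then obtain j0 where j0: "c j0 \<noteq> 0" by auto
  have vj: "real_of_int (v j) = r * real_of_int (c j)" for j
    using arg_cong[OF eq, of "\<lambda>x. x $ j"] by simp
  define \<rho> where "\<rho> = (of_int (v j0) / of_int (c j0) :: rat)"
  have r: "r = of_rat \<rho>" using vj[of j0] j0 by (simp add: \<rho>_def of_rat_divide)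
  have vq: "of_int (v j) = \<rho> * of_int (c j)" for j
  proof -
    have "(of_rat (of_int (v j)) :: real) = of_rat (\<rho> * of_int (c j))"
      using vj[of j] r by (simp add: of_rat_mult)
    then show ?thesis by (simp only: of_rat_eq_iff)
  qed
  obtain p q where pq: "quotient_of \<rho> = (p, q)" by (cases "quotient_of \<rho>")
  have q0: "0 < q" using quotient_of_denom_pos[OF pq] .
  have cop: "coprime p q" using quotient_of_coprime[OF pq] .
  have rho: "\<rho> = of_int p / of_int q" using quotient_of_div[OF pq] .
  have vpq: "v j * q = p * c j" for j
  proof -
    have "(of_int (v j) :: rat) = of_int p / of_int q * of_int (c j)" using vq[of j] rho by simp
    then have "(of_int (v j * q) :: rat) = of_int (p * c j)" using q0 by (simp add: field_simps)
    then show ?thesis by (simp only: of_int_eq_iff)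
  qed
  have qdvd: "q dvd c j" for j
  proof -
    have "q dvd p * c j" unfolding vpq[of j, symmetric] by simp
    moreover have "coprime q p" using cop by (simp add: coprime_commute)
    ultimately show ?thesis using coprime_dvd_mult_right_iff by blast
  qed
  have "\<forall>j. c j = q * (c j div q)" using qdvd by simp
  moreover have pr2: "\<forall>k d. (\<forall>i. c i = k * d i) \<longrightarrow> \<bar>k\<bar> = 1" using prim by (simp add: primitive_vec_def)
  ultimately have "\<bar>q\<bar> = 1" using pr2[rule_format, of q "\<lambda>j. c j div q"] by simp
  then have q1: "q = 1" using q0 by simp
  have "v = (\<lambda>j. p * c j)" using vpq q1 by (simp add: fun_eq_iff)
  then show ?thesis by blast
qed

lemma E_dir:
  assumes le: "loose_edge D E" and par: "parallel_to c E" and c0: "c \<noteq> (\<lambda>_. 0)"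
    and x: "x \<in> E" and y: "y \<in> E"
  shows "\<exists>r. y - x = r *\<^sub>R realvec c"
proof -
  obtain a b t where ab: "a \<in> E" "b \<in> E" "a \<noteq> b" "realvec c = t *\<^sub>R (b - a)"
    using par unfolding parallel_to_def by blast
  have t0: "t \<noteq> 0"
  proof
    assume "t = 0"
    then have "realvec c = 0" using ab(4) by simp
    then have "c = (\<lambda>_. 0)" by (auto simp: fun_eq_iff vec_eq_iff)
    then show False using c0 by simp
  qed
  have ad: "aff_dim E = 1" using le by (simp add: loose_edge_def)
  have sub: "affine hull {a, b} \<subseteq> affine hull E" using ab(1,2) by (intro hull_mono) simp
  have "aff_dim (affine hull {a, b}) = aff_dim (affine hull E)"
    unfolding aff_dim_affine_hull using ab(3) ad by simp
  then have eqh: "affine hull {a, b} = affine hull E"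
    by (intro affine_dim_equal[OF _ _ _ sub]) (simp_all add: affine_affine_hull)
  have "x \<in> affine hull E" "y \<in> affine hull E" using x y by (simp_all add: hull_inc)
  then have "x \<in> affine hull {a, b}" "y \<in> affine hull {a, b}" unfolding eqh .
  then obtain u1 v1 u2 v2 where xy: "x = u1 *\<^sub>R a + v1 *\<^sub>R b" "u1 + v1 = 1"
      "y = u2 *\<^sub>R a + v2 *\<^sub>R b" "u2 + v2 = 1"
    unfolding affine_hull_2 by (auto simp only: mem_Collect_eq)
  have "u1 = 1 - v1" "u2 = 1 - v2" using xy(2,4) by simp_all
  then have "x = (1 - v1) *\<^sub>R a + v1 *\<^sub>R b" "y = (1 - v2) *\<^sub>R a + v2 *\<^sub>R b"
    using xy(1,3) by simp_all
  then have xa: "x = a + v1 *\<^sub>R (b - a)" and ya: "y = a + v2 *\<^sub>R (b - a)"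
    by (simp_all add: algebra_simps)
  have "y - x = (v2 - v1) *\<^sub>R (b - a)" unfolding xa ya by (simp add: algebra_simps)
  also have "\<dots> = ((v2 - v1) / t) *\<^sub>R realvec c" using ab(4) t0 by simp
  finally show ?thesis by blast
qed




lemma axis_nonneg: "0 \<le> (axis j (1::real) :: real^'n) $ k"
  by (simp add: axis_def)

lemma real_point:
  fixes c \<alpha> :: "'n::finite \<Rightarrow> int"
  assumes orthE: "\<And>\<xi>. (\<forall>j. 0 \<le> \<xi> $ j) \<Longrightarrow> \<xi> \<bullet> realvec c = 0 \<Longrightarrow> orth_to \<xi> E"
    and cpos: "\<exists>j. 0 < c j"
    and iM: "\<forall>\<xi>::real^'n. (\<forall>j. 0 \<le> \<xi> $ j) \<and> orth_to \<xi> E \<longrightarrow> 0 \<le> \<xi> \<bullet> realvec \<alpha>"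
  shows "\<exists>\<tau>::real. \<forall>j. 0 \<le> of_int (\<alpha> j) + \<tau> * of_int (c j)"
proof -
  have key: "0 \<le> \<xi> \<bullet> realvec \<alpha>" if "\<forall>j. 0 \<le> \<xi> $ j" "\<xi> \<bullet> realvec c = 0" for \<xi>
    using iM orthE that by blast
  define P where "P = {j. 0 < c j}"
  have finP: "finite P" "P \<noteq> {}" using cpos by (auto simp: P_def)
  define f where "f j = - real_of_int (\<alpha> j) / real_of_int (c j)" for j
  define \<tau> where "\<tau> = Max (f ` P)"
  have "0 \<le> of_int (\<alpha> j) + \<tau> * of_int (c j)" for j
  proof (cases "0 < c j")
    case True
    then have "f j \<le> \<tau>" unfolding \<tau>_def using finP by (intro Max_ge) (auto simp: P_def)
    moreover have "0 < real_of_int (c j)" using True by simp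
    ultimately have "f j * real_of_int (c j) \<le> \<tau> * real_of_int (c j)"
      by (intro mult_right_mono) simp_all
    moreover have "f j * real_of_int (c j) = - real_of_int (\<alpha> j)" using True by (simp add: f_def)
    ultimately have "- real_of_int (\<alpha> j) \<le> \<tau> * real_of_int (c j)" by simp
    then show ?thesis by simp
  next
    case False
    show ?thesis
    proof (cases "c j = 0")
      case True
      have "0 \<le> axis j 1 \<bullet> realvec \<alpha>"
        by (rule key) (simp_all add: axis_nonneg inner_axis' True)
      then show ?thesis using True by (simp add: inner_axis')
    next
      case cj: False
      with False have cjn: "c j < 0" by simp
      have "\<tau> \<in> f ` P" unfolding \<tau>_def using finP by (intro Max_in) auto
      then obtain j0 where j0: "j0 \<in> P" "\<tau> = f j0" by blast
      have cj0: "0 < c j0" using j0 by (simp add: P_def)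
      define \<xi> where "\<xi> = real_of_int (- c j) *\<^sub>R axis j0 (1::real) + real_of_int (c j0) *\<^sub>R axis j 1"
      have nn: "\<forall>k. 0 \<le> (\<xi> :: real^'n) $ k"
        using cjn cj0 by (simp add: \<xi>_def axis_def)
      have "\<xi> \<bullet> realvec c = 0" by (simp add: \<xi>_def inner_add_left inner_axis' algebra_simps)
      then have "0 \<le> \<xi> \<bullet> realvec \<alpha>" using key nn by blast
      then have h: "0 \<le> real_of_int (c j0) * real_of_int (\<alpha> j) - real_of_int (c j) * real_of_int (\<alpha> j0)"
        by (simp add: \<xi>_def inner_add_left inner_axis' algebra_simps)
      have "of_int (\<alpha> j) + \<tau> * of_int (c j)
          = (real_of_int (c j0) * real_of_int (\<alpha> j) - real_of_int (c j) * real_of_int (\<alpha> j0)) / real_of_int (c j0)"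
        using cj0 by (simp add: j0(2) f_def field_simps)
      also have "\<dots> \<ge> 0" using h cj0 by simp
      finally show ?thesis by simp
    qed
  qed
  then show ?thesis by blast
qed


lemma idot_neg: "idot a (\<lambda>j. - c j) = - idot a c"
  by (simp add: idot_def sum_negf)

theorem lemma2p5:
  fixes D E :: "(real^'n::finite) set"
    and c :: "'n \<Rightarrow> int"
    and xi :: "nat \<Rightarrow> ('n \<Rightarrow> int)"
    and w z :: "nat \<Rightarrow> int"
    and G H :: "('n, 'a::field) mpoly"
  assumes "is_newton_polyhedron D"
    and "loose_edge D E"
    and "primitive_vec c" and "parallel_to c E"
    and "\<forall>i < CARD('n) - 1. \<forall>j. 0 \<le> xi i j"
    and "lin_indep_family (CARD('n) - 1) xi"
    and "\<forall>i < CARD('n) - 1. idot (xi i) c = 0"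
    and "nonneg_wvec TYPE('n) w" and "nonneg_wvec TYPE('n) z"
    and "G \<in> Rw xi w" and "H \<in> Rw xi z"
    and "mp_coprime G H"
    and "\<not> (\<exists>m. m \<noteq> 0 \<and> Poly_Mapping.single m (1::'a) dvd G)"
    and "i \<in> Mset xi E"
  shows "{G * A + H * B | A B. A \<in> Rw xi (\<lambda>j. z j + i j) \<and> B \<in> Rw xi (\<lambda>j. w j + i j)}
         = Rw xi (\<lambda>j. w j + z j + i j)"
proof -
  note le = assms(2) and prim = assms(3) and par = assms(4) and li = assms(6) and orth = assms(7)
    and Gw = assms(10) and Hz = assms(11) and cop = assms(12) and nm = assms(13) and iM = assms(14)
  have c0: "c \<noteq> (\<lambda>_. 0)" using prim by (simp add: primitive_vec_def)
  have kerc: "\<exists>s. v = (\<lambda>j. s * c j)" if vk: "\<forall>i<CARD('n)-1. idot (xi i) v = 0" for v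
  proof -
    obtain r where "realvec v = r *\<^sub>R realvec c" using ker_real[OF li orth c0 vk] by blast
    then show ?thesis using ker_int[OF prim] by blast
  qed
  have orthE: "orth_to \<xi> E" if xc: "\<xi> \<bullet> realvec c = 0" for \<xi>
    unfolding orth_to_def
  proof (intro ballI)
    fix a b assume "a \<in> E" "b \<in> E"
    then obtain r where "b - a = r *\<^sub>R realvec c" using E_dir[OF le par c0] by blast
    then show "\<xi> \<bullet> (b - a) = 0" using xc by simp
  qed
  define c' where "c' = (if \<exists>j. 0 < c j then c else (\<lambda>j. - c j))"
  have rc': "realvec c' = realvec c \<or> realvec c' = - realvec c"
    by (auto simp: c'_def realvec_def vec_eq_iff)
  have orthE': "orth_to \<xi> E" if "\<xi> \<bullet> realvec c' = 0" for \<xi>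
    using rc' that orthE by (auto simp: inner_minus_right)
  have core: "core c' xi"
  proof
    show "\<forall>i<CARD('n)-1. idot (xi i) c' = 0" using orth by (simp add: c'_def idot_neg)
    show "\<exists>s. v = (\<lambda>j. s * c' j)" if vk: "\<forall>i<CARD('n)-1. idot (xi i) v = 0" for v
    proof -
      obtain s where s: "v = (\<lambda>j. s * c j)" using kerc[OF vk] by blast
      show ?thesis
      proof (cases "\<exists>j. 0 < c j")
        case True
        then have "v = (\<lambda>j. s * c' j)" using s by (simp add: c'_def)
        then show ?thesis by blast
      next
        case False
        then have "v = (\<lambda>j. (- s) * c' j)" using s by (simp add: c'_def fun_eq_iff)
        then show ?thesis by blast
      qed
    qed
    show "\<exists>j. 0 < c' j"
    proof (cases "\<exists>j. 0 < c j")
      case True then show ?thesis by (simp add: c'_def)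
    next
      case False
      obtain j where "c j \<noteq> 0" using c0 by auto
      then have "0 < - c j" using False by (simp add: not_less) (meson less_le not_le)
      then show ?thesis using False by (auto simp: c'_def)
    qed
  qed
  obtain \<alpha> where al: "omega xi \<alpha> = i"
    and iM': "\<forall>\<xi>::real^'n. (\<forall>j. 0 \<le> \<xi> $ j) \<and> orth_to \<xi> E \<longrightarrow> 0 \<le> \<xi> \<bullet> realvec \<alpha>"
    using iM unfolding Mset_def by blast
  obtain \<tau> where tau: "\<forall>j. 0 \<le> of_int (\<alpha> j) + (\<tau>::real) * of_int (c' j)"
  proof -
    have oe: "\<And>\<xi>. (\<forall>j. 0 \<le> \<xi> $ j) \<Longrightarrow> \<xi> \<bullet> realvec c' = 0 \<Longrightarrow> orth_to \<xi> E"
      using orthE' by blast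
    have ex: "\<exists>\<tau>::real. \<forall>j. 0 \<le> of_int (\<alpha> j) + \<tau> * of_int (c' j)"
      by (rule real_point[OF oe core.cpos[OF core] iM'])
    then show ?thesis using that by blast
  qed
  show ?thesis
  proof (rule set_eqI, rule iffI)
    fix X :: "('n \<Rightarrow>\<^sub>0 nat) \<Rightarrow>\<^sub>0 'a" assume "X \<in> {G * A + H * B | A B. A \<in> Rw xi (\<lambda>j. z j + i j) \<and> B \<in> Rw xi (\<lambda>j. w j + i j)}"
    then obtain A B where X: "X = G * A + H * B" and RA: "A \<in> Rw xi (\<lambda>j. z j + i j)"
      and RB: "B \<in> Rw xi (\<lambda>j. w j + i j)" by blast
    have "G * A \<in> Rw xi (\<lambda>j. w j + (z j + i j))" by (rule Rw_mult[OF Gw RA])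
    moreover have "H * B \<in> Rw xi (\<lambda>j. z j + (w j + i j))" by (rule Rw_mult[OF Hz RB])
    moreover have "(\<lambda>j. w j + (z j + i j)) = (\<lambda>j. w j + z j + i j)" "(\<lambda>j. z j + (w j + i j)) = (\<lambda>j. w j + z j + i j)"
      by (simp_all add: fun_eq_iff algebra_simps)
    ultimately show "X \<in> Rw xi (\<lambda>j. w j + z j + i j)" unfolding X by (simp add: Rw_add)
  next
    fix X :: "('n \<Rightarrow>\<^sub>0 nat) \<Rightarrow>\<^sub>0 'a" assume X: "X \<in> Rw xi (\<lambda>j. w j + z j + i j)"
    have "\<exists>A B. A \<in> Rw xi (\<lambda>j. z j + i j) \<and> B \<in> Rw xi (\<lambda>j. w j + i j) \<and> X = G * A + H * B"
    proof (cases "X = 0")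
      case True
      then have "X = G * 0 + H * 0" by simp
      then show ?thesis using Rw_zero by blast
    next
      case Xnz: False
      obtain g where g: "G = L c' (\<lambda>j. int (degree g) * cmv c' j) g"
        "vld c' (\<lambda>j. int (degree g) * cmv c' j) g" "coeff g 0 \<noteq> 0" "G \<noteq> 0"
        using core.G_structure[OF core Gw nm] by metis
      show ?thesis
      proof (cases "degree g = 0")
        case True
        show ?thesis by (rule core.case_d0[OF core g(1,3) True Gw X])
      next
        case False
        then have "1 \<le> degree g" by simp
        show ?thesis by (rule core.case_dpos[OF core g(1,3) \<open>1 \<le> degree g\<close> Gw Hz cop al tau X Xnz])
      qed
    qed
    then show "X \<in> {G * A + H * B | A B. A \<in> Rw xi (\<lambda>j. z j + i j) \<and> B \<in> Rw xi (\<lambda>j. w j + i j)}"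
      by blast
  qed
qed


end
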